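(* Let $b\ge 2$ be an integer. Every natural number that is antipalindromic in base $b$ and whose base-$b$ expansion has an odd number of digits is divisible by $\frac{b-1}{2}$ (in particular, $b$ is then odd, so $\frac{b-1}{2}$ is an integer).
   Context: For an integer $b\ge 2$, every natural number $m$ has a unique base-$b$ expansion $m=a_nb^n+\dots+a_1b+a_0$ with $a_0,\dots,a_n\in\{0,1,\dots,b-1\}$ and $a_n\neq 0$ (it has $n+1$ digits). The number $m$ is antipalindromic in base $b$ if $a_j=b-1-a_{n-j}$ for all $j\in\{0,1,\dots,n\}$. *)

theory Defs
  imports Main
begin

definition digit :: "nat \<Rightarrow> nat \<Rightarrow> nat \<Rightarrow> nat" where
  "digit b m j = (m div b ^ j) mod b"

text \<open>Number of base-b digits of m, i.e. n+1 where a_n is the leading nonzero digit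
  (for m > 0 and b >= 2): the least k with m < b^k.\<close>
definition num_digits :: "nat \<Rightarrow> nat \<Rightarrow> nat" where
  "num_digits b m = (LEAST k. m < b ^ k)"

text \<open>Natural numbers with a base-b expansion having a
  nonzero leading digit are the positive ones.\<close>
definition antipalindromic :: "nat \<Rightarrow> nat \<Rightarrow> bool" where
  "antipalindromic b m \<longleftrightarrow> m > 0 \<and>
     (\<forall>j \<le> num_digits b m - 1.
        digit b m j = b - 1 - digit b m (num_digits b m - 1 - j))"

end

theory Submission
  imports Defs
begin

lemma mod_pow_digits: "m mod b ^ n = (\<Sum>j<n. digit b m j * b ^ j)"
proof (induction n)
  case 0 then show ?case by simp
next
  case (Suc n)
  have "m mod b ^ Suc n = m mod (b ^ n * b)" by (simp add: mult.commute)
  also have "\<dots> = b ^ n * (m div b ^ n mod b) + m mod b ^ n" by (rule mod_mult2_eq)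
  finally show ?case using Suc by (simp add: digit_def mult.commute)
qed

theorem mainTheorem4:
  fixes b m :: nat
  assumes "b \<ge> 2"
    and "antipalindromic b m"
    and "odd (num_digits b m)"
  shows "odd b \<and> ((b - 1) div 2) dvd m"
proof -
  define N where "N = num_digits b m"
  define d where "d = digit b m"
  have ex: "m < b ^ m" proof -
    have "m < 2 ^ m" by (rule less_exp)
    also have "(2::nat) ^ m \<le> b ^ m" using assms(1) by (rule power_mono) simp
    finally show ?thesis .
  qed
  have mlt: "m < b ^ N" unfolding N_def num_digits_def by (rule LeastI[of _ m]) (rule ex)
  have N0: "N > 0" using assms(3) N_def by (cases N) auto
  have ap: "\<And>j. j < N \<Longrightarrow> d j = b - 1 - d (N - 1 - j)"
  proof -
    have H: "\<forall>j \<le> N - 1. d j = b - 1 - d (N - 1 - j)"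
      using assms(2) unfolding antipalindromic_def N_def[symmetric] d_def[symmetric] by blast
    fix j assume "j < N"
    then have "j \<le> N - 1" by simp
    then show "d j = b - 1 - d (N - 1 - j)" using H by blast
  qed
  have dle: "\<And>j. d j \<le> b - 1" unfolding d_def digit_def 
  proof -
    fix j have "m div b ^ j mod b < b" using assms(1) by simp
    then show "m div b ^ j mod b \<le> b - 1" by linarith
  qed
  have pair: "\<And>j. j < N \<Longrightarrow> d j + d (N - 1 - j) = b - 1"
  proof -
    fix j assume j: "j < N"
    have "N - 1 - j < N" using j by simp
    then have "d (N - 1 - j) = b - 1 - d (N - 1 - (N - 1 - j))" by (rule ap)
    moreover have "N - 1 - (N - 1 - j) = j" using j by simp
    ultimately show "d j + d (N - 1 - j) = b - 1" using dle[of j] by simp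
  qed
  obtain k where k: "N = 2 * k + 1" using assms(3) N_def by (metis oddE)
  have "d k + d k = b - 1" using pair[of k] k by simp
  then have oddb: "odd b" using assms(1) by presburger
  define c where "c = (b - 1) div 2"
  have bc: "b = 2 * c + 1" using oddb c_def assms(1) by presburger
  define S where "S = (\<Sum>j<N. d j)"
  have rev: "(\<Sum>j<N. d (N - Suc j)) = S" unfolding S_def by (rule sum.nat_diff_reindex)
  have "S + S = (\<Sum>j<N. d j + d (N - 1 - j))" using rev by (simp add: sum.distrib S_def)
  also have "\<dots> = (\<Sum>j<N. b - 1)" 
  proof (rule sum.cong)
    fix x assume "x \<in> {..<N}"
    then show "d x + d (N - 1 - x) = b - 1" using pair by simp
  qed simp
  finally have "S + S = N * (2 * c)" using bc by simp
  then have S: "S = N * c" by simp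
  have "m = m mod b ^ N" using mlt by simp
  also have "\<dots> = (\<Sum>j<N. d j * b ^ j)" unfolding d_def by (rule mod_pow_digits)
  finally have meq: "m = (\<Sum>j<N. d j * b ^ j)" .
  have bm: "b mod c = 1 mod c" using bc by (simp add: mod_Suc)
  have dm: "\<And>j. (d j * b ^ j) mod c = d j mod c"
  proof -
    fix j
    have "b ^ j mod c = 1 mod c" by (metis bm power_mod power_one)
    then show "(d j * b ^ j) mod c = d j mod c" by (metis mod_mult_right_eq mult.right_neutral)
  qed
  then have "m mod c = (\<Sum>j<N. d j mod c) mod c" 
  proof -
    have "m mod c = (\<Sum>j<N. d j * b ^ j) mod c" using meq by simp
    also have "\<dots> = (\<Sum>j<N. (d j * b ^ j) mod c) mod c" by (rule mod_sum_eq[symmetric])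
    also have "\<dots> = (\<Sum>j<N. d j mod c) mod c" using dm by simp
    finally show ?thesis .
  qed
  also have "\<dots> = S mod c" unfolding S_def by (rule mod_sum_eq)
  also have "\<dots> = 0" using S by simp
  finally show ?thesis using oddb c_def by (simp add: mod_eq_0_iff_dvd)
qed

end
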